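(* In the production planning setting described in the context (general case), fix $\pmb{x}\in\mathbb{X}$ and let $G$, the arc lengths $c_{uw}$, arc weights $\delta_{uw}$ and the restricted longest path problem (RLP) be as defined in the context. Then for every real $C^*$: a cumulative demand scenario with cost $C^*$ is optimal for the adversarial problem $\max_{\pmb{D}\in\mathcal{U}^d}\sum_{t\in[T]}\max\{f_I(X_t,D_t),f_B(X_t,D_t)\}$ if and only if there is an optimal $\mathfrak{s}$-$\mathfrak{t}$ path of length $C^*$ for the RLP instance.
   Context: There are $T\ge 1$ periods, $[T]=\{1,\dots,T\}$. Given are a production cost $c^P$, an inventory cost $c^I$, a backordering cost $c^B$ and a selling price $b^P$, and a set $\mathbb{X}\subseteq\mathbb{R}^T_+$ of feasible production plans described by finitely many linear constraints; for a plan $X_t=\sum_{i\in[t]}x_i$. For $t\in[T-1]$ let $f_I(X_t,D_t)=c^I(X_t-D_t)$, $f_B(X_t,D_t)=c^B(D_t-X_t)$; for $t=T$ let $f_I(X_T,D_T)=c^I(X_T-D_T)+c^PX_T-b^PD_T$, $f_B(X_T,D_T)=c^B(D_T-X_T)+c^PX_T-b^PX_T$. Nominal cumulative demands $\widehat{D}_t\ge0$ are nondecreasing in $t$, deviations $0\le\Delta_t\le\widehat{D}_t$. $\mathcal{U}^d=\{\pmb{D}: D_t\le D_{t+1}\ (t\in[T-1]),\ D_t\in[\widehat{D}_t-\Delta_t,\widehat{D}_t+\Delta_t],\ |\{t:D_t\ne\widehat{D}_t\}|\le\Gamma^d\}$, $\Gamma^d\in\{0,\dots,T\}$ (intervals may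 overlap). For $k\in[T]$ let $\mathcal{D}_k=[\widehat{D}_k-\Delta_k,\widehat{D}_k+\Delta_k]\cap\bigcup_{t\in[T]}\{\widehat{D}_t-\Delta_t,\widehat{D}_t,\widehat{D}_t+\Delta_t\}$. The directed layered graph $G$ has layers $V_0=\{\mathfrak{s}\}$, $V_1,\dots,V_T$, $V_{T+1}=\{\mathfrak{t}\}$, where $V_k$ ($k\in[T]$) contains exactly one node $u$ for each value $D_u\in\mathcal{D}_k$. Arcs: $(\mathfrak{s},w)$ for every $w\in V_1$; $(u,w)$ for $u\in V_{k-1}$, $w\in V_k$ ($k=2,\dots,T$) whenever $D_u\le D_w$; $(u,\mathfrak{t})$ for every $u\in V_T$. An arc $(u,w)$ with $w\in V_k$, $k\in[T]$, has length $c_{uw}=\max\{f_I(X_k,D_w),f_B(X_k,D_w)\}$ and weight $\delta_{uw}=1$ if $D_w\ne\widehat{D}_k$ and $\delta_{uw}=0$ if $D_w=\widehat{D}_k$; arcs into $\mathfrak{t}$ have length $0$ and weight $0$. The RLP instance asks for an $\mathfrak{s}$-$\mathfrak{t}$ path $p$ with $\sum_{(u,w)\in p}\delta_{uw}\le\Gamma^d$ maximizing $\sum_{(u,w)\in p}c_{uw}$. The cost of a scenario $\pmb{D}$ is $\sum_{t\in[T]}\max\{f_I(X_t,D_t),f_B(X_t,D_t)\}$. *)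

theory Defs
  imports Main Complex_Main
begin

(* Periods are 1..T.  Plans, demands etc. are functions nat => real; only the
   values at 1..T matter. *)

definition cumX :: "(nat \<Rightarrow> real) \<Rightarrow> nat \<Rightarrow> real" where
  "cumX x t = (\<Sum>i\<in>{1..t}. x i)"

definition plans :: "nat \<Rightarrow> nat \<Rightarrow> (nat \<Rightarrow> nat \<Rightarrow> real) \<Rightarrow> (nat \<Rightarrow> real) \<Rightarrow> (nat \<Rightarrow> real) set" where
  "plans T m A b = {x. (\<forall>i\<in>{1..T}. 0 \<le> x i) \<and>
                        (\<forall>j<m. (\<Sum>i\<in>{1..T}. A j i * x i) \<le> b j)}"

definition fI :: "nat \<Rightarrow> real \<Rightarrow> real \<Rightarrow> real \<Rightarrow> real \<Rightarrow> nat \<Rightarrow> real \<Rightarrow> real \<Rightarrow> real" where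
  "fI T cP cI cB bP t Xt Dt =
     (if t = T then cI * (Xt - Dt) + cP * Xt - bP * Dt else cI * (Xt - Dt))"

definition fB :: "nat \<Rightarrow> real \<Rightarrow> real \<Rightarrow> real \<Rightarrow> real \<Rightarrow> nat \<Rightarrow> real \<Rightarrow> real \<Rightarrow> real" where
  "fB T cP cI cB bP t Xt Dt =
     (if t = T then cB * (Dt - Xt) + cP * Xt - bP * Xt else cB * (Dt - Xt))"

definition pcost :: "nat \<Rightarrow> real \<Rightarrow> real \<Rightarrow> real \<Rightarrow> real \<Rightarrow> (nat \<Rightarrow> real) \<Rightarrow> nat \<Rightarrow> real \<Rightarrow> real" where
  "pcost T cP cI cB bP x k v =
     max (fI T cP cI cB bP k (cumX x k) v) (fB T cP cI cB bP k (cumX x k) v)"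

definition scen_cost :: "nat \<Rightarrow> real \<Rightarrow> real \<Rightarrow> real \<Rightarrow> real \<Rightarrow> (nat \<Rightarrow> real) \<Rightarrow> (nat \<Rightarrow> real) \<Rightarrow> real" where
  "scen_cost T cP cI cB bP x D = (\<Sum>t\<in>{1..T}. pcost T cP cI cB bP x t (D t))"

definition Ud :: "nat \<Rightarrow> (nat \<Rightarrow> real) \<Rightarrow> (nat \<Rightarrow> real) \<Rightarrow> nat \<Rightarrow> (nat \<Rightarrow> real) set" where
  "Ud T Dh Dl \<Gamma> = {D. (\<forall>t\<in>{1..<T}. D t \<le> D (t+1)) \<and>
                     (\<forall>t\<in>{1..T}. Dh t - Dl t \<le> D t \<and> D t \<le> Dh t + Dl t) \<and>
                     card {t\<in>{1..T}. D t \<noteq> Dh t} \<le> \<Gamma>}"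

definition Dset :: "nat \<Rightarrow> (nat \<Rightarrow> real) \<Rightarrow> (nat \<Rightarrow> real) \<Rightarrow> nat \<Rightarrow> real set" where
  "Dset T Dh Dl k = {Dh k - Dl k .. Dh k + Dl k} \<inter>
      (\<Union>t\<in>{1..T}. {Dh t - Dl t, Dh t, Dh t + Dl t})"

datatype gnode = Src | Lay nat real | Snk

definition gnodes :: "nat \<Rightarrow> (nat \<Rightarrow> real) \<Rightarrow> (nat \<Rightarrow> real) \<Rightarrow> gnode set" where
  "gnodes T Dh Dl = {Src, Snk} \<union> {Lay k v | k v. k \<in> {1..T} \<and> v \<in> Dset T Dh Dl k}"

definition garcs :: "nat \<Rightarrow> (nat \<Rightarrow> real) \<Rightarrow> (nat \<Rightarrow> real) \<Rightarrow> (gnode \<times> gnode) set" where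
  "garcs T Dh Dl =
     {(Src, Lay 1 v) | v. v \<in> Dset T Dh Dl 1}
   \<union> {(Lay (k - 1) u, Lay k w) | k u w. k \<in> {2..T} \<and> u \<in> Dset T Dh Dl (k - 1)
                                    \<and> w \<in> Dset T Dh Dl k \<and> u \<le> w}
   \<union> {(Lay T u, Snk) | u. u \<in> Dset T Dh Dl T}"

fun arc_len :: "nat \<Rightarrow> real \<Rightarrow> real \<Rightarrow> real \<Rightarrow> real \<Rightarrow> (nat \<Rightarrow> real) \<Rightarrow> gnode \<times> gnode \<Rightarrow> real" where
  "arc_len T cP cI cB bP x (u, Lay k w) = pcost T cP cI cB bP x k w"
| "arc_len T cP cI cB bP x (u, _) = 0"

fun arc_wt :: "(nat \<Rightarrow> real) \<Rightarrow> gnode \<times> gnode \<Rightarrow> nat" where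
  "arc_wt Dh (u, Lay k w) = (if w \<noteq> Dh k then 1 else 0)"
| "arc_wt Dh (u, _) = 0"

definition path_arcs :: "'a list \<Rightarrow> ('a \<times> 'a) list" where
  "path_arcs p = zip p (tl p)"

definition st_path :: "nat \<Rightarrow> (nat \<Rightarrow> real) \<Rightarrow> (nat \<Rightarrow> real) \<Rightarrow> gnode list \<Rightarrow> bool" where
  "st_path T Dh Dl p \<longleftrightarrow> p \<noteq> [] \<and> hd p = Src \<and> last p = Snk \<and>
      set p \<subseteq> gnodes T Dh Dl \<and> set (path_arcs p) \<subseteq> garcs T Dh Dl"

definition rlp_feasible :: "nat \<Rightarrow> (nat \<Rightarrow> real) \<Rightarrow> (nat \<Rightarrow> real) \<Rightarrow> nat \<Rightarrow> gnode list \<Rightarrow> bool" where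
  "rlp_feasible T Dh Dl \<Gamma> p \<longleftrightarrow> st_path T Dh Dl p \<and>
      sum_list (map (arc_wt Dh) (path_arcs p)) \<le> \<Gamma>"

definition path_len :: "nat \<Rightarrow> real \<Rightarrow> real \<Rightarrow> real \<Rightarrow> real \<Rightarrow> (nat \<Rightarrow> real) \<Rightarrow> gnode list \<Rightarrow> real" where
  "path_len T cP cI cB bP x p = sum_list (map (arc_len T cP cI cB bP x) (path_arcs p))"

end

theory Submission
  imports Defs
begin


definition nd :: "nat \<Rightarrow> (nat \<Rightarrow> real) \<Rightarrow> nat \<Rightarrow> gnode" where
  "nd T g i = (if i = 0 then Src else if i \<le> T then Lay i (g i) else Snk)"

lemma path_arcs_map: "path_arcs (map f [0..<Suc n]) = map (\<lambda>i. (f i, f (Suc i))) [0..<n]"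
  unfolding path_arcs_def
  by (rule nth_equalityI) (auto simp: nth_tl simp del: upt_Suc)

lemma path_arcs_nd: "path_arcs (map (nd T g) [0..<T+2]) = map (\<lambda>i. (nd T g i, nd T g (Suc i))) [0..<T+1]"
  using path_arcs_map[of "nd T g" "T+1"] by simp

lemma len_nd:
  "path_len T cP cI cB bP x (map (nd T g) [0..<T+2]) = scen_cost T cP cI cB bP x g"
proof -
  have "path_len T cP cI cB bP x (map (nd T g) [0..<T+2])
      = (\<Sum>i\<in>{0..<T+1}. arc_len T cP cI cB bP x (nd T g i, nd T g (Suc i)))"
    unfolding path_len_def path_arcs_nd
    by (simp add: sum_set_upt_conv_sum_list_nat[symmetric] o_def del: upt_Suc)
  also have "\<dots> = (\<Sum>i<T. arc_len T cP cI cB bP x (nd T g i, nd T g (Suc i)))"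
    by (simp add: atLeast0LessThan nd_def)
  also have "\<dots> = (\<Sum>i<T. pcost T cP cI cB bP x (Suc i) (g (Suc i)))"
    by (rule sum.cong) (auto simp: nd_def)
  also have "\<dots> = scen_cost T cP cI cB bP x g"
    unfolding scen_cost_def using sum.atLeast1_atMost_eq[of "\<lambda>t. pcost T cP cI cB bP x t (g t)" T]
    by simp
  finally show ?thesis .
qed

lemma wt_nd:
  "sum_list (map (arc_wt Dh) (path_arcs (map (nd T g) [0..<T+2]))) = card {t\<in>{1..T}. g t \<noteq> Dh t}"
proof -
  have "sum_list (map (arc_wt Dh) (path_arcs (map (nd T g) [0..<T+2])))
      = (\<Sum>i\<in>{0..<T+1}. arc_wt Dh (nd T g i, nd T g (Suc i)))"
    unfolding path_arcs_nd
    by (simp add: sum_set_upt_conv_sum_list_nat[symmetric] o_def del: upt_Suc)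
  also have "\<dots> = (\<Sum>i<T. arc_wt Dh (nd T g i, nd T g (Suc i)))"
    by (simp add: atLeast0LessThan nd_def)
  also have "\<dots> = (\<Sum>i<T. (\<lambda>t. if g t \<noteq> Dh t then 1 else 0) (Suc i))"
    by (rule sum.cong) (auto simp: nd_def)
  also have "\<dots> = (\<Sum>t\<in>{1..T}. if g t \<noteq> Dh t then 1 else 0)"
    using sum.atLeast1_atMost_eq[of "\<lambda>t. if g t \<noteq> Dh t then (1::nat) else 0" T]
    by simp
  also have "\<dots> = card {t\<in>{1..T}. g t \<noteq> Dh t}"
    by (simp add: sum.If_cases) (simp add: Int_def conj_ac)
  finally show ?thesis .
qed



lemma nd_feasible:
  assumes T1: "1 \<le> T"
    and inD: "\<forall>t\<in>{1..T}. g t \<in> Dset T Dh Dl t"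
    and mono: "\<forall>t\<in>{1..<T}. g t \<le> g (t+1)"
    and cd: "card {t\<in>{1..T}. g t \<noteq> Dh t} \<le> \<Gamma>"
  shows "rlp_feasible T Dh Dl \<Gamma> (map (nd T g) [0..<T+2])"
proof -
  let ?p = "map (nd T g) [0..<T+2]"
  have hd: "hd ?p = Src" by (simp add: nd_def hd_map del: upt_Suc)
  have lst: "last ?p = Snk" by (simp add: nd_def last_map del: upt_Suc)
  have nodes: "set ?p \<subseteq> gnodes T Dh Dl"
    using inD by (auto simp: nd_def gnodes_def)
  have arcs: "set (path_arcs ?p) \<subseteq> garcs T Dh Dl"
  proof
    fix e assume "e \<in> set (path_arcs ?p)"
    then obtain i where i: "i < T+1" and e: "e = (nd T g i, nd T g (Suc i))"
      unfolding path_arcs_nd by (auto simp del: upt_Suc)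
    show "e \<in> garcs T Dh Dl"
    proof (cases "i = 0")
      case True
      then show ?thesis using e T1 inD by (auto simp: nd_def garcs_def)
    next
      case False
      show ?thesis
      proof (cases "i = T")
        case True
        then show ?thesis using e T1 inD False by (auto simp: nd_def garcs_def)
      next
        case F2: False
        have "(Lay (Suc i - 1) (g i), Lay (Suc i) (g (Suc i))) \<in> garcs T Dh Dl"
          unfolding garcs_def
          apply (rule UnI1, rule UnI2)
          apply (rule CollectI)
          apply (rule exI[of _ "Suc i"], rule exI[of _ "g i"], rule exI[of _ "g (Suc i)"])
          using i False F2 inD mono by auto
        then show ?thesis using e False F2 i by (simp add: nd_def)
      qed
    qed
  qed
  show ?thesis
    unfolding rlp_feasible_def st_path_def wt_nd
    using hd lst nodes arcs cd by (simp del: upt_Suc)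
qed

lemma path_arcs_Cons2: "path_arcs (a # b # r) = (a, b) # path_arcs (b # r)"
  by (simp add: path_arcs_def)

lemma shape:
  assumes "set (path_arcs q) \<subseteq> garcs T Dh Dl" "q \<noteq> []" "last q = Snk"
    "hd q = Lay k u" "1 \<le> k" "k \<le> T"
  shows "\<exists>g. q = map (\<lambda>i. Lay i (g i)) [k..<T+1] @ [Snk] \<and> g k = u \<and>
     (\<forall>i\<in>{k..T}. g i \<in> Dset T Dh Dl i) \<and> (\<forall>i. k \<le> i \<and> i < T \<longrightarrow> g i \<le> g (Suc i))"
  using assms
proof (induction q arbitrary: k u)
  case Nil
  then show ?case by simp
next
  case (Cons a r)
  have a: "a = Lay k u" using Cons.prems by simp
  have "r \<noteq> []" using Cons.prems a by auto
  then obtain b r' where r: "r = b # r'" by (cases r) auto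
  have ab: "(a, b) \<in> garcs T Dh Dl" and ar: "set (path_arcs r) \<subseteq> garcs T Dh Dl"
    using Cons.prems(1) r by (auto simp: path_arcs_Cons2)
  have uD: "u \<in> Dset T Dh Dl k" using ab a by (auto simp: garcs_def)
  consider (snk) "k = T" "b = Snk" | (lay) w where "k < T" "b = Lay (Suc k) w" "w \<in> Dset T Dh Dl (Suc k)" "u \<le> w"
    using ab a unfolding garcs_def by auto
  then show ?case
  proof cases
    case snk
    have "r' = []"
    proof (rule ccontr)
      assume "r' \<noteq> []"
      then obtain c r'' where "r' = c # r''" by (cases r') auto
      then have "(Snk, c) \<in> garcs T Dh Dl" using ar r snk by (auto simp: path_arcs_Cons2)
      then show False by (auto simp: garcs_def)
    qed
    then show ?thesis using snk a r uD
      by (intro exI[of _ "\<lambda>_. u"]) auto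
  next
    case lay
    obtain g where g: "r = map (\<lambda>i. Lay i (g i)) [Suc k..<T+1] @ [Snk]" "g (Suc k) = w"
      "\<forall>i\<in>{Suc k..T}. g i \<in> Dset T Dh Dl i" "\<forall>i. Suc k \<le> i \<and> i < T \<longrightarrow> g i \<le> g (Suc i)"
      using Cons.IH[OF ar] r lay Cons.prems by auto
    let ?g = "g(k := u)"
    have "map (\<lambda>i. Lay i (?g i)) [k..<T+1] = Lay k u # map (\<lambda>i. Lay i (?g i)) [Suc k..<T+1]"
      using lay by (simp add: upt_conv_Cons del: upt_Suc)
    also have "map (\<lambda>i. Lay i (?g i)) [Suc k..<T+1] = map (\<lambda>i. Lay i (g i)) [Suc k..<T+1]"
      by (rule map_cong) auto
    finally have "a # r = map (\<lambda>i. Lay i (?g i)) [k..<T+1] @ [Snk]"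
      using g a by simp
    moreover have "\<forall>i\<in>{k..T}. ?g i \<in> Dset T Dh Dl i" using g uD by auto
    moreover have "\<forall>i. k \<le> i \<and> i < T \<longrightarrow> ?g i \<le> ?g (Suc i)"
      using g lay by (auto simp: le_Suc_eq Suc_le_eq dest: le_neq_implies_less)
    ultimately show ?thesis by (intro exI[of _ ?g]) auto
  qed
qed



lemma affI: "(b - a) * fI T cP cI cB bP k X v = (b - v) * fI T cP cI cB bP k X a + (v - a) * fI T cP cI cB bP k X b"
  unfolding fI_def by (simp add: algebra_simps)

lemma affB: "(b - a) * fB T cP cI cB bP k X v = (b - v) * fB T cP cI cB bP k X a + (v - a) * fB T cP cI cB bP k X b"
  unfolding fB_def by (simp add: algebra_simps)

lemma pcost_convex:
  assumes "a \<le> v" "v \<le> (b::real)"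
  shows "(b - a) * pcost T cP cI cB bP x k v \<le> (b - v) * pcost T cP cI cB bP x k a + (v - a) * pcost T cP cI cB bP x k b"
proof -
  let ?I = "fI T cP cI cB bP k (cumX x k)" and ?B = "fB T cP cI cB bP k (cumX x k)"
  have h1: "(b - v) * ?I a \<le> (b - v) * max (?I a) (?B a)" "(v - a) * ?I b \<le> (v - a) * max (?I b) (?B b)"
    "(b - v) * ?B a \<le> (b - v) * max (?I a) (?B a)" "(v - a) * ?B b \<le> (v - a) * max (?I b) (?B b)"
    using assms by (auto intro: mult_left_mono)
  have m: "(b - a) * max (?I v) (?B v) \<in> {(b - a) * ?I v, (b - a) * ?B v}"
    by (simp add: max_def)
  have "(b - a) * ?I v \<le> (b - v) * max (?I a) (?B a) + (v - a) * max (?I b) (?B b)"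
       "(b - a) * ?B v \<le> (b - v) * max (?I a) (?B a) + (v - a) * max (?I b) (?B b)"
    using h1 affI[of b a T cP cI cB bP k "cumX x k" v] affB[of b a T cP cI cB bP k "cumX x k" v]
    by simp_all
  then show ?thesis using m unfolding pcost_def by auto
qed

definition Vset :: "nat \<Rightarrow> (nat \<Rightarrow> real) \<Rightarrow> (nat \<Rightarrow> real) \<Rightarrow> real set" where
  "Vset T Dh Dl = (\<Union>t\<in>{1..T}. {Dh t - Dl t, Dh t, Dh t + Dl t})"

lemma improve:
  assumes "D \<in> Ud T Dh Dl \<Gamma>"
  shows "\<exists>D'\<in>Ud T Dh Dl \<Gamma>. (\<forall>t\<in>{1..T}. D' t \<in> Vset T Dh Dl) \<and>
           scen_cost T cP cI cB bP x D \<le> scen_cost T cP cI cB bP x D'"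
  using assms
proof (induction "card (D ` {1..T} - Vset T Dh Dl)" arbitrary: D rule: less_induct)
  case less
  let ?V = "Vset T Dh Dl"
  let ?sc = "scen_cost T cP cI cB bP x"
  let ?pc = "pcost T cP cI cB bP x"
  show ?case
  proof (cases "\<forall>t\<in>{1..T}. D t \<in> ?V")
    case True
    then show ?thesis using less.prems by blast
  next
    case False
    then obtain t0 where t0: "t0 \<in> {1..T}" "D t0 \<notin> ?V" by blast
    define v where "v = D t0"
    define B where "B = {t\<in>{1..T}. D t = v}"
    define L where "L = (\<lambda>t. Dh t - Dl t) ` B \<union> {D s | s. s \<in> {1..T} \<and> D s < v}"
    define H where "H = (\<lambda>t. Dh t + Dl t) ` B \<union> {D s | s. s \<in> {1..T} \<and> D s > v}"
    define lo where "lo = Max L"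
    define hi where "hi = Min H"
    have Ud: "\<forall>t\<in>{1..<T}. D t \<le> D (t+1)" "\<forall>t\<in>{1..T}. Dh t - Dl t \<le> D t \<and> D t \<le> Dh t + Dl t"
       "card {t\<in>{1..T}. D t \<noteq> Dh t} \<le> \<Gamma>"
      using less.prems unfolding Ud_def by auto
    have vV: "v \<notin> ?V" using t0 v_def by simp
    have t0B: "t0 \<in> B" using t0 by (simp add: B_def v_def)
    have finL: "finite L" unfolding L_def B_def by auto
    have finH: "finite H" unfolding H_def B_def by auto
    have neL: "L \<noteq> {}" using t0B L_def by auto
    have neH: "H \<noteq> {}" using t0B H_def by auto
    have Lle: "\<forall>y\<in>L. y \<le> v" using Ud(2) unfolding L_def B_def by auto
    have Hge: "\<forall>y\<in>H. v \<le> y" using Ud(2) unfolding H_def B_def by auto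
    have lo_v: "lo \<le> v" using Lle finL neL lo_def by simp
    have v_hi: "v \<le> hi" using Hge finH neH hi_def by simp
    have loL: "lo \<in> L" using finL neL lo_def by simp
    have hiH: "hi \<in> H" using finH neH hi_def by simp
    have lo_cases: "lo \<in> ?V \<or> (\<exists>s\<in>{1..T}. lo = D s \<and> D s < v)"
      using loL t0 unfolding L_def B_def Vset_def by auto
    have hi_cases: "hi \<in> ?V \<or> (\<exists>s\<in>{1..T}. hi = D s \<and> D s > v)"
      using hiH t0 unfolding H_def B_def Vset_def by auto
    have lo_lt: "lo < v" using lo_cases lo_v vV by (metis order_le_less)
    have hi_gt: "v < hi" using hi_cases v_hi vV by (metis order_le_less)
    have DhV: "\<forall>t\<in>{1..T}. Dh t \<in> ?V" unfolding Vset_def by auto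
    define D1 where "D1 y = (\<lambda>t. if t \<in> B then y else D t)" for y
    have inUd: "D1 y \<in> Ud T Dh Dl \<Gamma>" if "lo \<le> y" "y \<le> hi" for y
    proof -
      have m: "D1 y t \<le> D1 y (t+1)" if t: "t \<in> {1..<T}" for t
      proof -
        have le: "D t \<le> D (t+1)" using Ud(1) t by auto
        consider "t \<in> B" "t+1 \<in> B" | "t \<notin> B" "t+1 \<notin> B" | "t \<in> B" "t+1 \<notin> B" | "t \<notin> B" "t+1 \<in> B"
          by blast
        then show ?thesis
        proof cases
          case 3
          then have "D (t+1) > v" using le t by (auto simp: B_def)
          then have "D (t+1) \<in> H" using t by (auto simp: H_def)
          then have "hi \<le> D (t+1)" using finH hi_def by simp
          then show ?thesis using 3 \<open>y \<le> hi\<close> by (simp add: D1_def)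
        next
          case 4
          then have "D t < v" using le t by (auto simp: B_def)
          then have "D t \<in> L" using t by (auto simp: L_def)
          then have "D t \<le> lo" using finL lo_def by simp
          then show ?thesis using 4 \<open>lo \<le> y\<close> by (simp add: D1_def)
        qed (use le in \<open>auto simp: D1_def\<close>)
      qed
      have bd: "Dh t - Dl t \<le> D1 y t \<and> D1 y t \<le> Dh t + Dl t" if t: "t \<in> {1..T}" for t
      proof (cases "t \<in> B")
        case True
        then have "Dh t - Dl t \<in> L" "Dh t + Dl t \<in> H" by (auto simp: L_def H_def)
        then have "Dh t - Dl t \<le> lo" "hi \<le> Dh t + Dl t" using finL finH lo_def hi_def by auto
        then show ?thesis using True \<open>lo \<le> y\<close> \<open>y \<le> hi\<close> by (simp add: D1_def)
      qed (use Ud(2) t in \<open>auto simp: D1_def\<close>)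
      have "{t\<in>{1..T}. D1 y t \<noteq> Dh t} \<subseteq> {t\<in>{1..T}. D t \<noteq> Dh t}"
      proof (rule subsetI)
        fix t assume t: "t \<in> {t\<in>{1..T}. D1 y t \<noteq> Dh t}"
        show "t \<in> {t\<in>{1..T}. D t \<noteq> Dh t}"
        proof (cases "t \<in> B")
          case True
          then have "D t = v" "t \<in> {1..T}" by (simp_all add: B_def)
          moreover have "Dh t \<in> ?V" using DhV \<open>t \<in> {1..T}\<close> by blast
          ultimately have "D t \<noteq> Dh t" using vV by metis
          then show ?thesis using \<open>t \<in> {1..T}\<close> by simp
        next
          case False
          then show ?thesis using t by (simp add: D1_def)
        qed
      qed
      note sub = this
      have cd: "card {t\<in>{1..T}. D1 y t \<noteq> Dh t} \<le> \<Gamma>"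
        using card_mono[OF _ sub] Ud(3) by simp
      show ?thesis unfolding Ud_def mem_Collect_eq
        by (intro conjI ballI m bd cd)
    qed
    have dec: "card (D1 y ` {1..T} - ?V) < card (D ` {1..T} - ?V)"
      if "y \<in> ?V \<or> (\<exists>s\<in>{1..T}. y = D s \<and> D s \<noteq> v)" for y
    proof (rule psubset_card_mono)
      show "finite (D ` {1..T} - ?V)" by simp
      have "D1 y ` {1..T} - ?V \<subseteq> D ` {1..T} - ?V - {v}"
      proof
        fix z assume "z \<in> D1 y ` {1..T} - ?V"
        then have zi: "z \<in> D1 y ` {1..T}" and zV: "z \<notin> ?V" by simp_all
        from zi obtain t where t1: "t \<in> {1..T}" and t2: "z = D1 y t" by (rule imageE) simp
        note t = t1 t2 zV
        show "z \<in> D ` {1..T} - ?V - {v}"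
        proof (cases "t \<in> B")
          case True
          then have zy: "z = y" using t2 by (simp add: D1_def)
          then have "y \<notin> ?V" using zV by simp
          with that obtain s where s: "s \<in> {1..T}" "y = D s" "D s \<noteq> v" by blast
          then show ?thesis using zy zV by blast
        next
          case False
          then have "z = D t" using t2 by (simp add: D1_def)
          moreover have "D t \<noteq> v" using False t1 by (simp add: B_def)
          ultimately show ?thesis using t1 zV by blast
        qed
      qed
      moreover have "v \<in> D ` {1..T} - ?V" using t0 vV v_def by auto
      ultimately show "D1 y ` {1..T} - ?V \<subset> D ` {1..T} - ?V" by blast
    qed
    have Bsub: "B \<subseteq> {1..T}" by (auto simp: B_def)
    have split: "?sc E = (\<Sum>t\<in>B. ?pc t (E t)) + (\<Sum>t\<in>{1..T} - B. ?pc t (E t))" for E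
      unfolding scen_cost_def
      using sum.subset_diff[of B "{1..T}" "\<lambda>t. ?pc t (E t)"] Bsub by (simp add: add.commute)
    have scD1: "?sc (D1 y) = (\<Sum>t\<in>B. ?pc t y) + (\<Sum>t\<in>{1..T} - B. ?pc t (D t))" for y
    proof -
      have "(\<Sum>t\<in>B. ?pc t (D1 y t)) = (\<Sum>t\<in>B. ?pc t y)"
        by (rule sum.cong) (simp_all add: D1_def)
      moreover have "(\<Sum>t\<in>{1..T} - B. ?pc t (D1 y t)) = (\<Sum>t\<in>{1..T} - B. ?pc t (D t))"
        by (rule sum.cong) (simp_all add: D1_def)
      ultimately show ?thesis by (simp only: split[of "D1 y"])
    qed
    have scD: "?sc D = (\<Sum>t\<in>B. ?pc t v) + (\<Sum>t\<in>{1..T} - B. ?pc t (D t))"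
    proof -
      have "(\<Sum>t\<in>B. ?pc t (D t)) = (\<Sum>t\<in>B. ?pc t v)"
        by (rule sum.cong) (simp_all add: B_def)
      then show ?thesis by (simp only: split[of D])
    qed
    define Sv where "Sv = (\<Sum>t\<in>B. ?pc t v)"
    define Sl where "Sl = (\<Sum>t\<in>B. ?pc t lo)"
    define Sh where "Sh = (\<Sum>t\<in>B. ?pc t hi)"
    have conv: "(hi - lo) * Sv \<le> (hi - v) * Sl + (v - lo) * Sh"
      unfolding Sv_def Sl_def Sh_def sum_distrib_left sum.distrib[symmetric]
      by (rule sum_mono) (rule pcost_convex[OF lo_v v_hi])
    have "Sv \<le> Sl \<or> Sv \<le> Sh"
    proof (rule ccontr)
      assume "\<not> ?thesis"
      then have a: "Sl < Sv" "Sh < Sv" by auto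
      have "(hi - v) * Sl < (hi - v) * Sv"
        using a(1) hi_gt by simp
      moreover have "(v - lo) * Sh < (v - lo) * Sv"
        using a(2) lo_lt by simp
      moreover have "(hi - lo) * Sv = (hi - v) * Sv + (v - lo) * Sv" by (simp add: algebra_simps)
      ultimately show False using conv by linarith
    qed
    then obtain y where y: "y = lo \<or> y = hi" "?sc D \<le> ?sc (D1 y)"
    proof
      assume "Sv \<le> Sl"
      then have "?sc D \<le> ?sc (D1 lo)" unfolding scD scD1 Sv_def Sl_def by linarith
      then show thesis using that by blast
    next
      assume "Sv \<le> Sh"
      then have "?sc D \<le> ?sc (D1 hi)" unfolding scD scD1 Sv_def Sh_def by linarith
      then show thesis using that by blast
    qed
    have yc: "y \<in> ?V \<or> (\<exists>s\<in>{1..T}. y = D s \<and> D s \<noteq> v)"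
      using y(1) lo_cases hi_cases by auto
    have yU: "D1 y \<in> Ud T Dh Dl \<Gamma>" using y(1) lo_v v_hi by (intro inUd) auto
    from less.hyps[OF dec[OF yc] yU] y(2) show ?thesis by auto
  qed
qed



lemma nd_list: "map (nd T g) [0..<T+2] = Src # map (\<lambda>i. Lay i (g i)) [1..<T+1] @ [Snk]"
proof -
  have "[0..<T+2] = 0 # [1..<T+1] @ [T+1]" by (simp add: upt_conv_Cons)
  moreover have "map (nd T g) [1..<T+1] = map (\<lambda>i. Lay i (g i)) [1..<T+1]"
    by (rule map_cong) (auto simp: nd_def)
  ultimately show ?thesis by (simp add: nd_def del: upt_Suc)
qed

lemma path_to_scen:
  assumes T1: "1 \<le> T" and f: "rlp_feasible T Dh Dl \<Gamma> p"
  shows "\<exists>D\<in>Ud T Dh Dl \<Gamma>. scen_cost T cP cI cB bP x D = path_len T cP cI cB bP x p"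
proof -
  have p: "p \<noteq> []" "hd p = Src" "last p = Snk" "set (path_arcs p) \<subseteq> garcs T Dh Dl"
    and w: "sum_list (map (arc_wt Dh) (path_arcs p)) \<le> \<Gamma>"
    using f unfolding rlp_feasible_def st_path_def by auto
  obtain q where q: "p = Src # q" using p by (cases p) auto
  have "q \<noteq> []" using q p by auto
  then obtain b r where r: "q = b # r" by (cases q) auto
  have sb: "(Src, b) \<in> garcs T Dh Dl" and aq: "set (path_arcs q) \<subseteq> garcs T Dh Dl"
    using p(4) q r by (auto simp: path_arcs_Cons2)
  obtain v where bv: "b = Lay 1 v" using sb by (auto simp: garcs_def)
  have lq: "last q = Snk" using p q \<open>q \<noteq> []\<close> by simp
  obtain g where g: "q = map (\<lambda>i. Lay i (g i)) [1..<T+1] @ [Snk]"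
     "\<forall>i\<in>{1..T}. g i \<in> Dset T Dh Dl i" "\<forall>i. 1 \<le> i \<and> i < T \<longrightarrow> g i \<le> g (Suc i)"
    using shape[OF aq \<open>q \<noteq> []\<close> lq, of 1 v] r bv T1 by auto
  have pe: "p = map (nd T g) [0..<T+2]" using q g(1) nd_list by simp
  have m: "g t \<le> g (t+1)" if "t \<in> {1..<T}" for t using g(3) that by auto
  have bd: "Dh t - Dl t \<le> g t \<and> g t \<le> Dh t + Dl t" if "t \<in> {1..T}" for t
  proof -
    have "g t \<in> Dset T Dh Dl t" using g(2) that by auto
    then show ?thesis by (auto simp: Dset_def)
  qed
  have cd: "card {t\<in>{1..T}. g t \<noteq> Dh t} \<le> \<Gamma>" using w wt_nd[of Dh T g] pe by simp
  have "g \<in> Ud T Dh Dl \<Gamma>"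
    unfolding Ud_def mem_Collect_eq by (intro conjI ballI m bd cd)
  then show ?thesis using len_nd pe by metis
qed

lemma scen_to_path:
  assumes T1: "1 \<le> T" and D: "D \<in> Ud T Dh Dl \<Gamma>" and V: "\<forall>t\<in>{1..T}. D t \<in> Vset T Dh Dl"
  shows "\<exists>p. rlp_feasible T Dh Dl \<Gamma> p \<and> path_len T cP cI cB bP x p = scen_cost T cP cI cB bP x D"
proof -
  have U: "\<forall>t\<in>{1..<T}. D t \<le> D (t+1)" "\<forall>t\<in>{1..T}. Dh t - Dl t \<le> D t \<and> D t \<le> Dh t + Dl t"
       "card {t\<in>{1..T}. D t \<noteq> Dh t} \<le> \<Gamma>"
    using D unfolding Ud_def by auto
  have "\<forall>t\<in>{1..T}. D t \<in> Dset T Dh Dl t"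
    using U(2) V unfolding Dset_def Vset_def by auto
  then have "rlp_feasible T Dh Dl \<Gamma> (map (nd T D) [0..<T+2])"
    using nd_feasible[OF T1 _ U(1) U(3)] by blast
  then show ?thesis using len_nd by blast
qed

theorem proposition1:
  fixes T m :: nat and A :: "nat \<Rightarrow> nat \<Rightarrow> real" and b :: "nat \<Rightarrow> real"
    and cP cI cB bP :: real and x Dh Dl :: "nat \<Rightarrow> real" and \<Gamma> :: nat and C :: real
  assumes "T \<ge> 1"
    and "x \<in> plans T m A b"
    and "\<forall>t\<in>{1..T}. 0 \<le> Dh t"
    and "\<forall>t\<in>{1..<T}. Dh t \<le> Dh (t + 1)"
    and "\<forall>t\<in>{1..T}. 0 \<le> Dl t \<and> Dl t \<le> Dh t"
    and "\<Gamma> \<le> T"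
  shows "(\<exists>D\<in>Ud T Dh Dl \<Gamma>. scen_cost T cP cI cB bP x D = C \<and>
            (\<forall>D'\<in>Ud T Dh Dl \<Gamma>. scen_cost T cP cI cB bP x D' \<le> C))
     \<longleftrightarrow>
         (\<exists>p. rlp_feasible T Dh Dl \<Gamma> p \<and> path_len T cP cI cB bP x p = C \<and>
            (\<forall>p'. rlp_feasible T Dh Dl \<Gamma> p' \<longrightarrow> path_len T cP cI cB bP x p' \<le> C))"
  proof -
  have T1: "1 \<le> T" using assms(1) .
  have P1: "\<forall>p. rlp_feasible T Dh Dl \<Gamma> p \<longrightarrow> (\<exists>D\<in>Ud T Dh Dl \<Gamma>. scen_cost T cP cI cB bP x D = path_len T cP cI cB bP x p)"
    using path_to_scen[OF T1] by blast
  have P2: "\<forall>D\<in>Ud T Dh Dl \<Gamma>. \<exists>p. rlp_feasible T Dh Dl \<Gamma> p \<and> scen_cost T cP cI cB bP x D \<le> path_len T cP cI cB bP x p"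
  proof
    fix D assume D: "D \<in> Ud T Dh Dl \<Gamma>"
    obtain D' where D': "D' \<in> Ud T Dh Dl \<Gamma>" "\<forall>t\<in>{1..T}. D' t \<in> Vset T Dh Dl"
      "scen_cost T cP cI cB bP x D \<le> scen_cost T cP cI cB bP x D'"
      using improve[OF D] by blast
    obtain p where "rlp_feasible T Dh Dl \<Gamma> p" "path_len T cP cI cB bP x p = scen_cost T cP cI cB bP x D'"
      using scen_to_path[OF T1 D'(1,2)] by blast
    then show "\<exists>p. rlp_feasible T Dh Dl \<Gamma> p \<and> scen_cost T cP cI cB bP x D \<le> path_len T cP cI cB bP x p"
      using D'(3) by auto
  qed
  show ?thesis
  proof
    assume "\<exists>D\<in>Ud T Dh Dl \<Gamma>. scen_cost T cP cI cB bP x D = C \<and>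
            (\<forall>D'\<in>Ud T Dh Dl \<Gamma>. scen_cost T cP cI cB bP x D' \<le> C)"
    then obtain D where D: "D \<in> Ud T Dh Dl \<Gamma>" "scen_cost T cP cI cB bP x D = C"
        "\<forall>D'\<in>Ud T Dh Dl \<Gamma>. scen_cost T cP cI cB bP x D' \<le> C" by blast
    obtain p where p: "rlp_feasible T Dh Dl \<Gamma> p" "C \<le> path_len T cP cI cB bP x p"
      using P2 D(1,2) by blast
    have all: "\<forall>p'. rlp_feasible T Dh Dl \<Gamma> p' \<longrightarrow> path_len T cP cI cB bP x p' \<le> C"
      using P1 D(3) by fastforce
    then have "path_len T cP cI cB bP x p = C" using p by force
    then show "\<exists>p. rlp_feasible T Dh Dl \<Gamma> p \<and> path_len T cP cI cB bP x p = C \<and>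
            (\<forall>p'. rlp_feasible T Dh Dl \<Gamma> p' \<longrightarrow> path_len T cP cI cB bP x p' \<le> C)"
      using p(1) all by blast
  next
    assume "\<exists>p. rlp_feasible T Dh Dl \<Gamma> p \<and> path_len T cP cI cB bP x p = C \<and>
            (\<forall>p'. rlp_feasible T Dh Dl \<Gamma> p' \<longrightarrow> path_len T cP cI cB bP x p' \<le> C)"
    then obtain p where p: "rlp_feasible T Dh Dl \<Gamma> p" "path_len T cP cI cB bP x p = C"
        "\<forall>p'. rlp_feasible T Dh Dl \<Gamma> p' \<longrightarrow> path_len T cP cI cB bP x p' \<le> C" by blast
    obtain D where D: "D \<in> Ud T Dh Dl \<Gamma>" "scen_cost T cP cI cB bP x D = C"
      using P1 p(1,2) by blast
    have "\<forall>D'\<in>Ud T Dh Dl \<Gamma>. scen_cost T cP cI cB bP x D' \<le> C"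
      using P2 p(3) by (meson order_trans)
    then show "\<exists>D\<in>Ud T Dh Dl \<Gamma>. scen_cost T cP cI cB bP x D = C \<and>
            (\<forall>D'\<in>Ud T Dh Dl \<Gamma>. scen_cost T cP cI cB bP x D' \<le> C)"
      using D by blast
  qed
qed

end
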